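(* There exist absolute constants $c_1,c_2>0$ such that the following holds. Suppose $\delta\le e^{-1}$, $C_{n,\delta}\ge c_1\log(n/\delta)$, and $k\ge c_2\, b\,(C_{n,\delta}+1)\max\{\Omega_{\max},E_{\max}\}$. Then $$P\left(\exists (i,j)\in E:\ |F_{ij}-p_{ij}|\ge\sqrt{\frac{C_{n,\delta}}{k\,v_{ij}}}\right)\le\delta.$$
   Context: $G=(V,E)$ is an undirected connected graph on $V=\{1,\dots,n\}$, each edge with a fixed orientation $(i,j)$. Weights $w\in\mathbb{R}^n$ are positive with $b\ge\max_{i,j}w_i/w_j$. For each edge $(i,j)\in E$, $k$ independent comparisons are performed, each won by $i$ with probability $p_{ij}=w_i/(w_i+w_j)$ (independent across edges); $F_{ij}$ is the fraction of them won by $i$. $\rho_{ij}=w_i/w_j$ and $v_{ij}=\rho_{ij}+2+\rho_{ij}^{-1}=1/(p_{ij}(1-p_{ij}))$. $\Omega_{ij}=(e_i-e_j)^TL^\dagger(e_i-e_j)$ is the effective resistance ($L$ the Laplacian, $L^\dagger$ its pseudoinverse), $\Omega_{\max}=\max_{i,j}\Omega_{ij}$. $E_{ij}$ is the set of edges on at least one simple path from $i$ to $j$, $E_{\max}=\max_{i,j}|E_{ij}|$. $C_{n,\delta}$ is a parameter. *)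

theory Defs
  imports "HOL-Probability.Probability"
begin

definition adj :: "(nat \<times> nat) set \<Rightarrow> nat \<Rightarrow> nat \<Rightarrow> bool" where
  "adj E i j \<longleftrightarrow> (i, j) \<in> E \<or> (j, i) \<in> E"

definition oriented_connected_graph :: "nat \<Rightarrow> (nat \<times> nat) set \<Rightarrow> bool" where
  "oriented_connected_graph n E \<longleftrightarrow>
     n \<ge> 1 \<and>
     E \<subseteq> {1..n} \<times> {1..n} \<and>
     (\<forall>i. (i, i) \<notin> E) \<and>
     (\<forall>i j. (i, j) \<in> E \<longrightarrow> (j, i) \<notin> E) \<and>
     (\<forall>i\<in>{1..n}. \<forall>j\<in>{1..n}. (i, j) \<in> {(a, b). adj E a b}\<^sup>*)"

definition laplacian :: "nat \<Rightarrow> (nat \<times> nat) set \<Rightarrow> nat \<Rightarrow> nat \<Rightarrow> real" where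
  "laplacian n E i j =
     (if i \<in> {1..n} \<and> j \<in> {1..n} then
        (if i = j then real (card {l \<in> {1..n}. adj E i l})
         else if adj E i j then -1 else 0)
      else 0)"

definition matmul :: "nat \<Rightarrow> (nat \<Rightarrow> nat \<Rightarrow> real) \<Rightarrow> (nat \<Rightarrow> nat \<Rightarrow> real) \<Rightarrow> nat \<Rightarrow> nat \<Rightarrow> real" where
  "matmul n A B i j = (\<Sum>l\<in>{1..n}. A i l * B l j)"

definition is_pinv :: "nat \<Rightarrow> (nat \<Rightarrow> nat \<Rightarrow> real) \<Rightarrow> (nat \<Rightarrow> nat \<Rightarrow> real) \<Rightarrow> bool" where
  "is_pinv n A X \<longleftrightarrow>
     (\<forall>i j. (i \<notin> {1..n} \<or> j \<notin> {1..n}) \<longrightarrow> X i j = 0) \<and>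
     (\<forall>i\<in>{1..n}. \<forall>j\<in>{1..n}.
        matmul n (matmul n A X) A i j = A i j \<and>
        matmul n (matmul n X A) X i j = X i j \<and>
        matmul n A X i j = matmul n A X j i \<and>
        matmul n X A i j = matmul n X A j i)"

definition pinv :: "nat \<Rightarrow> (nat \<Rightarrow> nat \<Rightarrow> real) \<Rightarrow> nat \<Rightarrow> nat \<Rightarrow> real" where
  "pinv n A = (THE X. is_pinv n A X)"

definition unit_vec :: "nat \<Rightarrow> nat \<Rightarrow> real" where
  "unit_vec i l = (if l = i then 1 else 0)"

definition eff_res :: "nat \<Rightarrow> (nat \<times> nat) set \<Rightarrow> nat \<Rightarrow> nat \<Rightarrow> real" where
  "eff_res n E i j =
     (\<Sum>a\<in>{1..n}. \<Sum>c\<in>{1..n}.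
        (unit_vec i a - unit_vec j a) * pinv n (laplacian n E) a c * (unit_vec i c - unit_vec j c))"

definition Omega_max :: "nat \<Rightarrow> (nat \<times> nat) set \<Rightarrow> real" where
  "Omega_max n E = Max {eff_res n E i j | i j. i \<in> {1..n} \<and> j \<in> {1..n}}"

definition simple_path :: "(nat \<times> nat) set \<Rightarrow> nat \<Rightarrow> nat \<Rightarrow> nat list \<Rightarrow> bool" where
  "simple_path E i j ps \<longleftrightarrow>
     ps \<noteq> [] \<and> hd ps = i \<and> last ps = j \<and> distinct ps \<and>
     (\<forall>t. Suc t < length ps \<longrightarrow> adj E (ps ! t) (ps ! Suc t))"

definition edge_on_path :: "nat \<times> nat \<Rightarrow> nat list \<Rightarrow> bool" where
  "edge_on_path e ps \<longleftrightarrow>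
     (\<exists>t. Suc t < length ps \<and> (e = (ps ! t, ps ! Suc t) \<or> e = (ps ! Suc t, ps ! t)))"

definition path_edges :: "(nat \<times> nat) set \<Rightarrow> nat \<Rightarrow> nat \<Rightarrow> (nat \<times> nat) set" where
  "path_edges E i j = {e \<in> E. \<exists>ps. simple_path E i j ps \<and> edge_on_path e ps}"

definition E_max :: "nat \<Rightarrow> (nat \<times> nat) set \<Rightarrow> nat" where
  "E_max n E = Max {card (path_edges E i j) | i j. i \<in> {1..n} \<and> j \<in> {1..n}}"

definition p_win :: "(nat \<Rightarrow> real) \<Rightarrow> nat \<Rightarrow> nat \<Rightarrow> real" where
  "p_win w i j = w i / (w i + w j)"

definition v_coef :: "(nat \<Rightarrow> real) \<Rightarrow> nat \<Rightarrow> nat \<Rightarrow> real" where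
  "v_coef w i j = w i / w j + 2 + w j / w i"

(* joint law of all outcomes: outcome ((i,j),t) = True iff i wins the t-th comparison on edge (i,j) *)
definition comparisons :: "(nat \<times> nat) set \<Rightarrow> (nat \<Rightarrow> real) \<Rightarrow> nat \<Rightarrow> ((nat \<times> nat) \<times> nat \<Rightarrow> bool) pmf" where
  "comparisons E w k =
     Pi_pmf (E \<times> {..<k}) False (\<lambda>((i, j), t). bernoulli_pmf (p_win w i j))"

definition frac_won :: "nat \<Rightarrow> ((nat \<times> nat) \<times> nat \<Rightarrow> bool) \<Rightarrow> nat \<times> nat \<Rightarrow> real" where
  "frac_won k \<omega> e = (\<Sum>t<k. if \<omega> (e, t) then 1 else 0) / real k"

end

theory Submission
  imports Defs
begin

lemma exp_quad:
  fixes y :: real assumes "\<bar>y\<bar> \<le> 1" shows "exp y \<le> 1 + y + y\<^sup>2"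
proof (cases "y \<ge> 0")
  case True thus ?thesis using exp_bound[of y] assms by simp
next
  case False
  define z where "z = -y"
  have z: "0 \<le> z" "z \<le> 1" using False assms z_def by auto
  have e: "exp z \<ge> 1 + z" by (rule exp_ge_add_one_self)
  have pe: "1 - z + z\<^sup>2 = (z - 1/2)\<^sup>2 + 3/4" by (simp add: power2_eq_square algebra_simps)
  have pos: "1 - z + z\<^sup>2 > 0" unfolding pe by (simp add: add_nonneg_pos)
  have "1 \<le> (1 + z) * (1 - z + z\<^sup>2)" using z by (simp add: algebra_simps power2_eq_square power3_eq_cube)
  also have "\<dots> \<le> exp z * (1 - z + z\<^sup>2)" using e pos by (intro mult_right_mono) auto
  finally have "1 \<le> exp z * (1 + y + y\<^sup>2)" by (simp add: z_def)
  moreover have "exp y = 1 / exp z" by (simp add: z_def exp_minus field_simps)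
  ultimately show ?thesis by (simp add: divide_le_eq mult.commute)
qed

lemma mgf_bern:
  fixes q l :: real assumes "0 \<le> q" "q \<le> 1" "\<bar>l\<bar> \<le> 1"
  shows "(\<integral>v. exp (l * ((if v then 1 else 0) - q)) \<partial>bernoulli_pmf q) \<le> exp (l\<^sup>2 * (q * (1 - q)))"
proof -
  have a: "exp (l * (1 - q)) \<le> 1 + l * (1 - q) + (l * (1 - q))\<^sup>2"
    by (rule exp_quad) (use assms in \<open>auto simp: abs_mult intro!: mult_le_one\<close>)
  have b: "exp (l * (0 - q)) \<le> 1 + l * (0 - q) + (l * (0 - q))\<^sup>2"
    by (rule exp_quad) (use assms in \<open>auto simp: abs_mult intro!: mult_le_one\<close>)
  have "(\<integral>v. exp (l * ((if v then 1 else 0) - q)) \<partial>bernoulli_pmf q)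
        = exp (l * (1 - q)) * q + exp (l * (0 - q)) * (1 - q)" using assms by simp
  also have "\<dots> \<le> (1 + l * (1 - q) + (l * (1 - q))\<^sup>2) * q + (1 + l * (0 - q) + (l * (0 - q))\<^sup>2) * (1 - q)"
    using a b assms by (intro add_mono mult_right_mono) auto
  also have "\<dots> = 1 + l\<^sup>2 * (q * (1 - q))" by (simp add: algebra_simps power2_eq_square)
  also have "\<dots> \<le> exp (l\<^sup>2 * (q * (1 - q)))" by (rule exp_ge_add_one_self)
  finally show ?thesis .
qed

lemma exp_sum_prod_eq:
  fixes q :: "'a \<Rightarrow> real"
  assumes "finite A" "B \<subseteq> A"
  shows "exp (l * (\<Sum>x\<in>B. (if \<omega> x then 1 else 0) - q x)) =
         (\<Prod>x\<in>A. (\<lambda>x v. if x \<in> B then exp (l * ((if v then 1 else 0) - q x)) else 1) x (\<omega> x))"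
proof -
  have fB: "finite B" using assms finite_subset by blast
  have "exp (l * (\<Sum>x\<in>B. (if \<omega> x then 1 else 0) - q x)) = (\<Prod>x\<in>B. exp (l * ((if \<omega> x then 1 else 0) - q x)))"
    by (simp add: sum_distrib_left exp_sum fB)
  also have "\<dots> = (\<Prod>x\<in>A \<inter> B. exp (l * ((if \<omega> x then 1 else 0) - q x)))"
    using assms by (simp add: Int_absorb1)
  also have "\<dots> = (\<Prod>x\<in>A. (if x \<in> B then exp (l * ((if \<omega> x then 1 else 0) - q x)) else 1))"
    by (rule prod.inter_restrict) (rule assms)
  finally show ?thesis by simp
qed

lemma mgf_Pi:
  fixes q :: "'a \<Rightarrow> real"
  assumes A: "finite A" "B \<subseteq> A" and q: "\<And>x. x \<in> A \<Longrightarrow> 0 \<le> q x \<and> q x \<le> 1" and l: "\<bar>l\<bar> \<le> 1"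
  shows "integrable (measure_pmf (Pi_pmf A False (\<lambda>x. bernoulli_pmf (q x))))
           (\<lambda>\<omega>. exp (l * (\<Sum>x\<in>B. (if \<omega> x then 1 else 0) - q x)))"
    and "measure_pmf.expectation (Pi_pmf A False (\<lambda>x. bernoulli_pmf (q x)))
           (\<lambda>\<omega>. exp (l * (\<Sum>x\<in>B. (if \<omega> x then 1 else 0) - q x)))
         \<le> exp (l\<^sup>2 * (\<Sum>x\<in>B. q x * (1 - q x)))"
proof -
  define f where "f = (\<lambda>x v. if x \<in> B then exp (l * ((if v then 1 else 0) - q x)) else (1::real))"
  have eq: "(\<lambda>\<omega>. exp (l * (\<Sum>x\<in>B. (if \<omega> x then 1 else 0) - q x))) = (\<lambda>\<omega>. \<Prod>x\<in>A. f x (\<omega> x))"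
    unfolding f_def using exp_sum_prod_eq[OF A] by blast
  have int: "integrable (measure_pmf (bernoulli_pmf (q x))) (f x)" for x
    by (rule integrable_measure_pmf_finite) (rule finite_subset[of _ UNIV], auto)
  show "integrable (measure_pmf (Pi_pmf A False (\<lambda>x. bernoulli_pmf (q x))))
           (\<lambda>\<omega>. exp (l * (\<Sum>x\<in>B. (if \<omega> x then 1 else 0) - q x)))"
    unfolding eq by (rule integrable_prod_Pi_pmf[OF A(1) int])
  have "measure_pmf.expectation (Pi_pmf A False (\<lambda>x. bernoulli_pmf (q x)))
           (\<lambda>\<omega>. exp (l * (\<Sum>x\<in>B. (if \<omega> x then 1 else 0) - q x)))
      = (\<Prod>x\<in>A. measure_pmf.expectation (bernoulli_pmf (q x)) (\<lambda>v. f x v))"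
    unfolding eq by (rule expectation_prod_Pi_pmf[OF A(1) int]) (auto simp: f_def)
  also have "\<dots> \<le> (\<Prod>x\<in>A. (if x \<in> B then exp (l\<^sup>2 * (q x * (1 - q x))) else 1))"
  proof (rule prod_mono)
    fix x assume x: "x \<in> A"
    show "0 \<le> measure_pmf.expectation (bernoulli_pmf (q x)) (f x) \<and>
          measure_pmf.expectation (bernoulli_pmf (q x)) (f x) \<le> (if x \<in> B then exp (l\<^sup>2 * (q x * (1 - q x))) else 1)"
    proof
      show "0 \<le> measure_pmf.expectation (bernoulli_pmf (q x)) (f x)"
        by (rule Bochner_Integration.integral_nonneg) (auto simp: f_def)
      show "measure_pmf.expectation (bernoulli_pmf (q x)) (f x) \<le> (if x \<in> B then exp (l\<^sup>2 * (q x * (1 - q x))) else 1)"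
        using mgf_bern[of "q x" l] q[OF x] l by (auto simp: f_def)
    qed
  qed
  also have "\<dots> = (\<Prod>x\<in>A \<inter> B. exp (l\<^sup>2 * (q x * (1 - q x))))"
    by (rule prod.inter_restrict[symmetric]) (rule A)
  also have "\<dots> = exp (l\<^sup>2 * (\<Sum>x\<in>B. q x * (1 - q x)))"
    using A finite_subset[OF A(2) A(1)] by (simp add: Int_absorb1 exp_sum sum_distrib_left)
  finally show "measure_pmf.expectation (Pi_pmf A False (\<lambda>x. bernoulli_pmf (q x)))
           (\<lambda>\<omega>. exp (l * (\<Sum>x\<in>B. (if \<omega> x then 1 else 0) - q x)))
         \<le> exp (l\<^sup>2 * (\<Sum>x\<in>B. q x * (1 - q x)))" .
qed

lemma markov_exp:
  fixes q :: "'a \<Rightarrow> real"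
  assumes A: "finite A" "B \<subseteq> A" and q: "\<And>x. x \<in> A \<Longrightarrow> 0 \<le> q x \<and> q x \<le> 1" and l: "\<bar>l\<bar> \<le> 1"
  shows "measure_pmf.prob (Pi_pmf A False (\<lambda>x. bernoulli_pmf (q x)))
           {\<omega>. l * (\<Sum>x\<in>B. (if \<omega> x then 1 else 0) - q x) \<ge> a}
         \<le> exp (- a + l\<^sup>2 * (\<Sum>x\<in>B. q x * (1 - q x)))"
proof -
  let ?M = "Pi_pmf A False (\<lambda>x. bernoulli_pmf (q x))"
  let ?S = "\<lambda>\<omega>. l * (\<Sum>x\<in>B. (if \<omega> x then 1 else 0) - q x)"
  have "{\<omega>. ?S \<omega> \<ge> a} = {\<omega>\<in>space (measure_pmf ?M). exp (?S \<omega>) \<ge> exp a}" by auto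
  hence "measure_pmf.prob ?M {\<omega>. ?S \<omega> \<ge> a} = measure_pmf.prob ?M {\<omega>\<in>space (measure_pmf ?M). exp (?S \<omega>) \<ge> exp a}"
    by simp
  also have "\<dots> \<le> measure_pmf.expectation ?M (\<lambda>\<omega>. exp (?S \<omega>)) / exp a"
    by (rule integral_Markov_inequality_measure[where A = UNIV]) (use mgf_Pi(1)[OF A q l] in auto)
  also have "\<dots> \<le> exp (l\<^sup>2 * (\<Sum>x\<in>B. q x * (1 - q x))) / exp a"
    by (rule divide_right_mono) (use mgf_Pi(2)[OF A q l] in auto)
  also have "\<dots> = exp (- a + l\<^sup>2 * (\<Sum>x\<in>B. q x * (1 - q x)))"
    by (subst exp_add) (simp add: exp_minus divide_inverse mult.commute)
  finally show ?thesis .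
qed

lemma tail_abs:
  fixes q :: "'a \<Rightarrow> real"
  assumes A: "finite A" "B \<subseteq> A" and q: "\<And>x. x \<in> A \<Longrightarrow> 0 \<le> q x \<and> q x \<le> 1" and l: "0 \<le> l" "l \<le> 1"
  shows "measure_pmf.prob (Pi_pmf A False (\<lambda>x. bernoulli_pmf (q x)))
           {\<omega>. \<bar>\<Sum>x\<in>B. (if \<omega> x then 1 else 0) - q x\<bar> \<ge> c}
         \<le> 2 * exp (- (l * c) + l\<^sup>2 * (\<Sum>x\<in>B. q x * (1 - q x)))"
proof -
  let ?M = "Pi_pmf A False (\<lambda>x. bernoulli_pmf (q x))"
  let ?S = "\<lambda>\<omega>. (\<Sum>x\<in>B. (if \<omega> x then 1 else 0) - q x)"
  let ?V = "(\<Sum>x\<in>B. q x * (1 - q x))"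
  have sub: "{\<omega>. \<bar>?S \<omega>\<bar> \<ge> c} \<subseteq> {\<omega>. l * ?S \<omega> \<ge> l * c} \<union> {\<omega>. (-l) * ?S \<omega> \<ge> l * c}"
  proof
    fix \<omega> assume "\<omega> \<in> {\<omega>. \<bar>?S \<omega>\<bar> \<ge> c}"
    hence "?S \<omega> \<ge> c \<or> - ?S \<omega> \<ge> c" by auto
    thus "\<omega> \<in> {\<omega>. l * ?S \<omega> \<ge> l * c} \<union> {\<omega>. (-l) * ?S \<omega> \<ge> l * c}"
      using l mult_left_mono by fastforce
  qed
  have "measure_pmf.prob ?M {\<omega>. \<bar>?S \<omega>\<bar> \<ge> c} \<le> measure_pmf.prob ?M ({\<omega>. l * ?S \<omega> \<ge> l * c} \<union> {\<omega>. (-l) * ?S \<omega> \<ge> l * c})"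
    by (rule measure_pmf.finite_measure_mono[OF sub]) auto
  also have "\<dots> \<le> measure_pmf.prob ?M {\<omega>. l * ?S \<omega> \<ge> l * c} + measure_pmf.prob ?M {\<omega>. (-l) * ?S \<omega> \<ge> l * c}"
    by (rule measure_Un_le) auto
  also have "\<dots> \<le> exp (- (l * c) + l\<^sup>2 * ?V) + exp (- (l * c) + (-l)\<^sup>2 * ?V)"
    by (intro add_mono markov_exp[OF A q]) (use l in auto)
  also have "\<dots> = 2 * exp (- (l * c) + l\<^sup>2 * ?V)" by simp
  finally show ?thesis .
qed


lemma edge_bound:
  assumes G: "oriented_connected_graph n E" and wpos: "\<forall>i\<in>{1..n}. w i > 0"
    and e: "(i, j) \<in> E" and k: "k > 0" and C: "C \<ge> 0"
    and Cv: "C * v_coef w i j \<le> 4 * real k"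
  shows "measure_pmf.prob (comparisons E w k)
           {\<omega>. \<bar>frac_won k \<omega> (i, j) - p_win w i j\<bar> \<ge> sqrt (C / (real k * v_coef w i j))} \<le> 2 * exp (- C / 4)"
proof -
  have Esub: "E \<subseteq> {1..n} \<times> {1..n}" using G by (simp add: oriented_connected_graph_def)
  have fE: "finite E" using Esub finite_subset by blast
  define A where "A = E \<times> {..<k}"
  have fA: "finite A" using fE by (simp add: A_def)
  define q where "q = (\<lambda>x::(nat \<times> nat) \<times> nat. p_win w (fst (fst x)) (snd (fst x)))"
  have comp: "comparisons E w k = Pi_pmf A False (\<lambda>x. bernoulli_pmf (q x))"
    unfolding comparisons_def A_def q_def
    by (intro arg_cong[where f = "Pi_pmf _ _"] ext) (auto simp: case_prod_unfold)
  have q01: "0 \<le> q x \<and> q x \<le> 1" if "x \<in> A" for x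
  proof -
    have "fst (fst x) \<in> {1..n}" "snd (fst x) \<in> {1..n}" using that Esub by (auto simp: A_def)
    hence "w (fst (fst x)) > 0" "w (snd (fst x)) > 0" using wpos by auto
    thus ?thesis by (simp add: q_def p_win_def)
  qed
  define B where "B = (\<lambda>t. ((i, j), t)) ` {..<k}"
  have BA: "B \<subseteq> A" using e by (auto simp: A_def B_def)
  have inj: "inj_on (\<lambda>t. ((i, j), t)) {..<k}" by (auto simp: inj_on_def)
  have ij: "i \<in> {1..n}" "j \<in> {1..n}" using e Esub by auto
  have wi: "w i > 0" and wj: "w j > 0" using ij wpos by auto
  define p where "p = p_win w i j"
  define s where "s = p * (1 - p)"
  have p01: "0 < p" "p < 1" using wi wj by (auto simp: p_def p_win_def)
  have s0: "s > 0" using p01 by (simp add: s_def)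
  have v: "v_coef w i j = 1 / s"
    using wi wj by (simp add: s_def p_def p_win_def v_coef_def field_simps power2_eq_square)
  define K where "K = real k"
  have K0: "K > 0" using k by (simp add: K_def)
  define \<tau> where "\<tau> = sqrt (C / (real k * v_coef w i j))"
  have nn: "C / (real k * v_coef w i j) \<ge> 0" using C k s0 by (simp add: v)
  have tau2: "\<tau>\<^sup>2 = C * s / K" unfolding \<tau>_def real_sqrt_pow2[OF nn] using s0 K0 by (simp add: v K_def)
  have tau0: "\<tau> \<ge> 0" using nn by (simp add: \<tau>_def)
  have "C * s / K \<le> (2 * s)\<^sup>2"
  proof -
    have "C \<le> 4 * K * s" using Cv s0 by (simp add: v K_def field_simps)
    hence "C * s \<le> 4 * K * s * s" using s0 by (intro mult_right_mono) auto
    thus ?thesis using K0 by (simp add: field_simps power2_eq_square)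
  qed
  hence "\<tau>\<^sup>2 \<le> (2 * s)\<^sup>2" using tau2 by simp
  hence tau_le: "\<tau> \<le> 2 * s" by (rule power2_le_imp_le) (use s0 in auto)
  define l where "l = \<tau> / (2 * s)"
  have l01: "0 \<le> l" "l \<le> 1" using tau0 s0 tau_le by (auto simp: l_def)
  let ?S = "\<lambda>\<omega>. (\<Sum>x\<in>B. (if \<omega> x then 1 else 0) - q x)"
  have S: "?S \<omega> = K * (frac_won k \<omega> (i, j) - p)" for \<omega>
  proof -
    have "?S \<omega> = (\<Sum>t<k. (if \<omega> ((i, j), t) then 1 else 0) - p)"
      unfolding B_def by (subst sum.reindex[OF inj]) (simp add: q_def p_def)
    also have "\<dots> = (\<Sum>t<k. (if \<omega> ((i, j), t) then 1 else 0)) - K * p"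
      by (simp add: sum_subtractf K_def)
    also have "\<dots> = K * (frac_won k \<omega> (i, j) - p)"
      using K0 by (simp add: frac_won_def K_def field_simps)
    finally show ?thesis .
  qed
  have V: "(\<Sum>x\<in>B. q x * (1 - q x)) = K * s"
    unfolding B_def by (subst sum.reindex[OF inj]) (simp add: q_def p_def s_def K_def)
  have sub: "{\<omega>. \<bar>frac_won k \<omega> (i, j) - p_win w i j\<bar> \<ge> \<tau>} \<subseteq> {\<omega>. \<bar>?S \<omega>\<bar> \<ge> K * \<tau>}"
  proof
    fix \<omega> assume "\<omega> \<in> {\<omega>. \<bar>frac_won k \<omega> (i, j) - p_win w i j\<bar> \<ge> \<tau>}"
    hence "\<bar>frac_won k \<omega> (i, j) - p\<bar> \<ge> \<tau>" by (simp add: p_def)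
    hence "K * \<tau> \<le> K * \<bar>frac_won k \<omega> (i, j) - p\<bar>" using K0 by (intro mult_left_mono) auto
    thus "\<omega> \<in> {\<omega>. \<bar>?S \<omega>\<bar> \<ge> K * \<tau>}" using K0 by (simp add: S abs_mult)
  qed
  have "measure_pmf.prob (comparisons E w k)
           {\<omega>. \<bar>frac_won k \<omega> (i, j) - p_win w i j\<bar> \<ge> \<tau>}
        \<le> measure_pmf.prob (Pi_pmf A False (\<lambda>x. bernoulli_pmf (q x))) {\<omega>. \<bar>?S \<omega>\<bar> \<ge> K * \<tau>}"
    unfolding comp by (rule measure_pmf.finite_measure_mono[OF sub]) auto
  also have "\<dots> \<le> 2 * exp (- (l * (K * \<tau>)) + l\<^sup>2 * (\<Sum>x\<in>B. q x * (1 - q x)))"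
    by (rule tail_abs[OF fA BA q01 l01])
  also have "- (l * (K * \<tau>)) + l\<^sup>2 * (\<Sum>x\<in>B. q x * (1 - q x)) = - K * \<tau>\<^sup>2 / (4 * s)"
    unfolding V l_def using s0 by (simp add: field_simps power2_eq_square)
  also have "\<dots> = - C / 4" unfolding tau2 using s0 K0 by (simp add: field_simps)
  finally show ?thesis by (simp add: \<tau>_def)
qed


lemma final_arith:
  fixes n :: nat and \<delta> C :: real and m :: nat
  assumes n: "n \<ge> 1" and d: "0 < \<delta>" "\<delta> \<le> 1/2" and m: "m \<le> n * n"
    and C: "C \<ge> 12 * ln (real n / \<delta>)"
  shows "real m * (2 * exp (- C / 4)) \<le> \<delta>"
proof -
  define L where "L = ln (real n / \<delta>)"
  have nd: "real n / \<delta> > 0" using n d by auto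
  have eL: "exp L = real n / \<delta>" using nd by (simp add: L_def)
  have "exp (- C / 4) \<le> exp (- (L + L + L))" using C by (simp add: L_def)
  also have "\<dots> = 1 / (exp L * exp L * exp L)" unfolding exp_minus exp_add by (simp add: divide_inverse)
  also have "\<dots> = \<delta>^3 / (real n)^3" unfolding eL using d n by (simp add: field_simps power3_eq_cube)
  finally have e: "exp (- C / 4) \<le> \<delta>^3 / (real n)^3" .
  have "real m * (2 * exp (- C / 4)) \<le> (real n * real n) * (2 * (\<delta>^3 / (real n)^3))"
    using m e by (intro mult_mono) (auto simp flip: of_nat_mult)
  also have "\<dots> = 2 * \<delta>^2 / real n * \<delta>" using n by (simp add: field_simps power3_eq_cube power2_eq_square)
  also have "\<dots> \<le> 1 * \<delta>"
  proof (rule mult_right_mono)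
    have "\<delta>^2 \<le> (1/2)^2" using d by (intro power_mono) auto
    hence "2 * \<delta>^2 \<le> 1" by (simp add: power2_eq_square)
    also have "1 \<le> real n" using n by simp
    finally show "2 * \<delta>^2 / real n \<le> 1" using n by (simp add: divide_le_eq)
  qed (use d in auto)
  finally show ?thesis by simp
qed

lemma E_max_ge1:
  assumes G: "oriented_connected_graph n E" and e: "(i0, j0) \<in> E"
  shows "E_max n E \<ge> 1"
proof -
  have Esub: "E \<subseteq> {1..n} \<times> {1..n}" and irr: "(i0, i0) \<notin> E" using G by (auto simp: oriented_connected_graph_def)
  have fE: "finite E" using Esub finite_subset by blast
  have ne: "i0 \<noteq> j0" using irr e by auto
  have sp: "simple_path E i0 j0 [i0, j0]"
    unfolding simple_path_def using ne e by (auto simp: adj_def less_Suc_eq)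
  have eop: "edge_on_path (i0, j0) [i0, j0]" unfolding edge_on_path_def by (rule exI[of _ 0]) simp
  have "(i0, j0) \<in> path_edges E i0 j0" using sp eop e by (auto simp: path_edges_def)
  moreover have "finite (path_edges E i0 j0)" using fE by (auto simp: path_edges_def)
  ultimately have c1: "card (path_edges E i0 j0) \<ge> 1"
    by (metis One_nat_def Suc_leI card_gt_0_iff empty_iff)
  have fin: "finite {card (path_edges E i j) | i j. i \<in> {1..n} \<and> j \<in> {1..n}}"
    by (rule finite_image_set2) auto
  have mem: "card (path_edges E i0 j0) \<in> {card (path_edges E i j) | i j. i \<in> {1..n} \<and> j \<in> {1..n}}"
    using e Esub by blast
  show ?thesis unfolding E_max_def using Max_ge[OF fin mem] c1 by linarith
qed

theorem lemma1:
  shows "\<exists>c1 > 0. \<exists>c2 > 0. \<forall>(n::nat) (E::(nat \<times> nat) set) (w::nat \<Rightarrow> real) (b::real)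
           (\<delta>::real) (C::real) (k::nat).
     oriented_connected_graph n E \<longrightarrow>
     (\<forall>i\<in>{1..n}. w i > 0) \<longrightarrow>
     (\<forall>i\<in>{1..n}. \<forall>j\<in>{1..n}. w i / w j \<le> b) \<longrightarrow>
     0 < \<delta> \<longrightarrow> \<delta> \<le> exp (-1) \<longrightarrow>
     C \<ge> c1 * ln (real n / \<delta>) \<longrightarrow>
     real k \<ge> c2 * b * (C + 1) * max (Omega_max n E) (real (E_max n E)) \<longrightarrow>
     measure_pmf.prob (comparisons E w k)
       {\<omega>. \<exists>(i, j)\<in>E. \<bar>frac_won k \<omega> (i, j) - p_win w i j\<bar>
                         \<ge> sqrt (C / (real k * v_coef w i j))} \<le> \<delta>"
proof (rule exI[of _ "12::real"], rule conjI, simp, rule exI[of _ "1::real"], rule conjI, simp, intro allI impI)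
  fix n :: nat and E :: "(nat \<times> nat) set" and w :: "nat \<Rightarrow> real" and b \<delta> C :: real and k :: nat
  assume G: "oriented_connected_graph n E" and wpos: "\<forall>i\<in>{1..n}. w i > 0"
    and wb: "\<forall>i\<in>{1..n}. \<forall>j\<in>{1..n}. w i / w j \<le> b"
    and d0: "0 < \<delta>" and d1: "\<delta> \<le> exp (-1)" and C: "C \<ge> 12 * ln (real n / \<delta>)"
    and k: "real k \<ge> 1 * b * (C + 1) * max (Omega_max n E) (real (E_max n E))"
  have n: "n \<ge> 1" and Esub: "E \<subseteq> {1..n} \<times> {1..n}" using G by (auto simp: oriented_connected_graph_def)
  have fE: "finite E" using Esub finite_subset by blast
  have b1: "b \<ge> 1" using wb wpos n by (metis atLeastAtMost_iff divide_self le_refl less_irrefl)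
  have "exp (1::real) \<ge> 2" using exp_ge_add_one_self[of 1] by simp
  hence "exp (-1::real) \<le> 1/2" by (simp add: exp_minus field_simps)
  hence d2: "\<delta> \<le> 1/2" using d1 by simp
  have "real n / \<delta> \<ge> 1" using n d0 d2 by (simp add: field_simps)
  hence "ln (real n / \<delta>) \<ge> 0" by simp
  hence C0: "C \<ge> 0" using C by simp
  let ?F = "\<lambda>e. {\<omega>. \<bar>frac_won k \<omega> e - p_win w (fst e) (snd e)\<bar> \<ge> sqrt (C / (real k * v_coef w (fst e) (snd e)))}"
  have eq: "{\<omega>. \<exists>(i, j)\<in>E. \<bar>frac_won k \<omega> (i, j) - p_win w i j\<bar> \<ge> sqrt (C / (real k * v_coef w i j))}
        = (\<Union>e\<in>E. ?F e)" by fastforce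
  show "measure_pmf.prob (comparisons E w k)
       {\<omega>. \<exists>(i, j)\<in>E. \<bar>frac_won k \<omega> (i, j) - p_win w i j\<bar>
                         \<ge> sqrt (C / (real k * v_coef w i j))} \<le> \<delta>"
  proof (cases "E = {}")
    case True thus ?thesis using d0 by simp
  next
    case False
    then obtain i0 j0 where e0: "(i0, j0) \<in> E" by auto
    have "real (E_max n E) \<ge> 1" using E_max_ge1[OF G e0] by simp
    hence M: "max (Omega_max n E) (real (E_max n E)) \<ge> 1" by linarith
    have bC: "b * (C + 1) \<ge> 0" using b1 C0 by simp
    have "b * (C + 1) \<le> b * (C + 1) * max (Omega_max n E) (real (E_max n E))"
      using mult_left_mono[OF M bC] by simp
    hence kb: "real k \<ge> b * C + b" using k by (simp add: algebra_simps)
    hence kpos: "k > 0" using b1 C0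
      by (smt (verit) mult_nonneg_nonneg of_nat_0_less_iff)
    have bnd: "measure_pmf.prob (comparisons E w k) (?F e) \<le> 2 * exp (- C / 4)" if e: "e \<in> E" for e
    proof -
      obtain i j where eij: "e = (i, j)" by (cases e)
      have ij: "i \<in> {1..n}" "j \<in> {1..n}" using e eij Esub by auto
      have wi: "w i > 0" and wj: "w j > 0" using ij wpos by auto
      have "v_coef w i j \<le> 4 * b"
        using wb ij b1 unfolding v_coef_def by (smt (verit) atLeastAtMost_iff)
      hence "C * v_coef w i j \<le> C * (4 * b)" using C0 by (intro mult_left_mono) auto
      also have "\<dots> \<le> 4 * real k"
      proof -
        have "C * b \<le> b * C + b" using b1 by (simp add: mult.commute)
        hence "C * b \<le> real k" using kb by linarith
        thus ?thesis using kb by (simp add: mult.commute)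
      qed
      finally have "C * v_coef w i j \<le> 4 * real k" .
      thus ?thesis using edge_bound[OF G wpos e[unfolded eij] kpos C0] eij by simp
    qed
    have "measure_pmf.prob (comparisons E w k) (\<Union>e\<in>E. ?F e) \<le> (\<Sum>e\<in>E. measure_pmf.prob (comparisons E w k) (?F e))"
      by (rule measure_UNION_le[OF fE]) auto
    also have "\<dots> \<le> (\<Sum>e\<in>E. 2 * exp (- C / 4))" by (rule sum_mono) (rule bnd)
    also have "\<dots> = real (card E) * (2 * exp (- C / 4))" by simp
    also have "\<dots> \<le> \<delta>"
    proof (rule final_arith[OF n d0 d2 _ C])
      have "card E \<le> card ({1..n} \<times> {1..n})" by (rule card_mono) (use Esub in auto)
      thus "card E \<le> n * n" by (simp add: card_cartesian_product)
    qed
    finally have "measure_pmf.prob (comparisons E w k) (\<Union>e\<in>E. ?F e) \<le> \<delta>" .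
    thus ?thesis by (simp only: eq)
  qed
qed

end
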